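(* Let $A\in\mathbb{R}^{n\times n}$ and $C\in\mathbb{R}^{1\times n}$. Suppose there exist two eigenvalues $\lambda_p,\lambda_q$ of $A$ belonging to two different Jordan blocks of the Jordan form of $A$ and a positive integer $h$ such that $\lambda_p^h=\lambda_q^h$. Then for any $l\in\mathbb{N}$ and any positive integers $r_1,\ldots,r_l$, setting $t_i=r_ih$, the matrix with rows $CA^{t_1},\ldots,CA^{t_l}$ has rank less than $n$.
   Context: Setting: discrete-time single-output system $x(t+1)=Ax(t)+Bu(t)$, $y(t)=Cx(t)+Du(t)$ with output measured at selected time instances; the matrix with rows $CA^{t_1},\ldots,CA^{t_l}$ is the sample-based observability matrix. (For distinct nonzero $\lambda_p,\lambda_q$, the condition $\lambda_p^h=\lambda_q^h$ is equivalent to $|\lambda_p|=|\lambda_q|$ and $\pi/(\phi_q-\phi_p)=h/(2(k_q-k_p))$ for some distinct $k_p,k_q\in\{0,\ldots,h-1\}$, $\phi_i$ the phase of $\lambda_i$.) *)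

theory Defs
  imports "Jordan_Normal_Form.Jordan_Normal_Form" "Jordan_Normal_Form.DL_Rank_Submatrix"
begin

definition sample_obs_matrix :: "nat \<Rightarrow> real mat \<Rightarrow> real mat \<Rightarrow> nat list \<Rightarrow> real mat" where
  "sample_obs_matrix n A C ts = mat_of_rows n (map (\<lambda>t. row (C * A ^\<^sub>m t) 0) ts)"

end

theory Submission
  imports Defs
begin

lemma (in vec_space) kernel_low_rank:
  assumes M: "M \<in> carrier_mat n nc"
    and x: "x \<in> carrier_vec nc" "x \<noteq> 0\<^sub>v nc" "M *\<^sub>v x = 0\<^sub>v n"
  shows "rank M < nc"
proof (rule ccontr)
  assume "\<not> rank M < nc"
  then have r: "rank M = nc" using rank_le_nc[OF M] by linarith
  show False
  proof (cases "distinct (cols M)")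
    case True
    then have "lin_indpt (set (cols M))" using full_rank_lin_indpt[OF M r] by auto
    then show False using lin_depI[OF M x True] by blast
  next
    case False
    obtain S where S: "maximal S (\<lambda>T. T \<subseteq> set (cols M) \<and> lin_indpt T)"
      using maximal_exists[of "(\<lambda>T. T \<subseteq> set (cols M) \<and> lin_indpt T)" "card (set (cols M))" "{}"]
      by (meson List.finite_set card_mono empty_iff empty_subsetI finite_lin_indpt2 rev_finite_subset)
    then have "card S \<le> card (set (cols M))" by (simp add: card_mono maximal_def)
    moreover have "card (set (cols M)) < nc"
      using False M card_distinct card_length cols_length carrier_matD(2) nat_less_le by metis
    ultimately show False using rank_card_indpt[OF M S] r by simp
  qed
qed

lemma take_sum_mono:
  fixes xs :: "(nat \<times> 'a) list"
  assumes "i < j" "j \<le> length xs" "0 \<notin> fst ` set xs"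
  shows "sum_list (map fst (take i xs)) < sum_list (map fst (take j xs))"
  using assms
proof (induction j)
  case 0 then show ?case by simp
next
  case (Suc j)
  have j: "j < length xs" using Suc.prems by auto
  have "xs ! j \<in> set xs" using j by simp
  then have pos: "fst (xs ! j) > 0" using Suc.prems by (metis gr0I image_eqI)
  have eq: "sum_list (map fst (take (Suc j) xs)) = sum_list (map fst (take j xs)) + fst (xs ! j)"
    using j by (simp add: take_Suc_conv_app_nth)
  show ?case
  proof (cases "i = j")
    case True then show ?thesis using eq pos by simp
  next
    case False
    then have "sum_list (map fst (take i xs)) < sum_list (map fst (take j xs))"
      using Suc by auto
    then show ?thesis using eq by simp
  qed
qed

lemma take_sum_lt:
  fixes xs :: "(nat \<times> 'a) list"
  assumes "i < length xs" "0 \<notin> fst ` set xs"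
  shows "sum_list (map fst (take i xs)) < sum_list (map fst xs)"
  using take_sum_mono[OF assms(1) order.refl assms(2)] by simp

lemma jordan_matrix_col_entry:
  assumes "i < length n_as" "k < sum_list (map fst n_as)" "0 \<notin> fst ` set n_as"
  shows "jordan_matrix n_as $$ (k, sum_list (map fst (take i n_as))) =
     (if k = sum_list (map fst (take i n_as)) then snd (n_as ! i) else 0)"
  using assms
proof (induction n_as arbitrary: i k)
  case Nil
  then show ?case by simp
next
  case (Cons a as)
  obtain m b where a: "a = (m, b)" by force
  have m: "m > 0" using Cons.prems a by auto
  have JM: "jordan_matrix (a # as) = four_block_mat (jordan_block m b)
     (0\<^sub>m m (sum_list (map fst as))) (0\<^sub>m (sum_list (map fst as)) m) (jordan_matrix as)"
    using jordan_matrix_dim[of as] unfolding jordan_matrix_def by (simp add: a Let_def)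
  show ?case
  proof (cases i)
    case 0
    then show ?thesis using Cons.prems m unfolding JM by (auto simp: a jordan_block_def)
  next
    case (Suc i')
    have i': "i' < length as" using Cons.prems Suc by auto
    have s: "sum_list (map fst (take i (a # as))) = m + sum_list (map fst (take i' as))"
      using Suc a by simp
    have lt: "sum_list (map fst (take i' as)) < sum_list (map fst as)"
      using take_sum_lt[OF i'] Cons.prems by auto
    show ?thesis
    proof (cases "k < m")
      case True
      then show ?thesis unfolding JM s using lt by simp
    next
      case False
      have "k - m < sum_list (map fst as)" using Cons.prems False a by auto
      from Cons.IH[OF i' this] Cons.prems
      show ?thesis unfolding JM s using lt False Suc a by auto
    qed
  qed
qed

lemma jordan_matrix_eigen:
  fixes n_as :: "(nat \<times> 'a :: field) list"
  assumes "i < length n_as" "0 \<notin> fst ` set n_as"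
  shows "jordan_matrix n_as *\<^sub>v unit_vec (sum_list (map fst n_as)) (sum_list (map fst (take i n_as)))
    = snd (n_as ! i) \<cdot>\<^sub>v unit_vec (sum_list (map fst n_as)) (sum_list (map fst (take i n_as)))"
  (is "?J *\<^sub>v unit_vec ?N ?s = ?l \<cdot>\<^sub>v _")
proof (rule eq_vecI)
  have s: "?s < ?N" using take_sum_lt[OF assms] .
  fix k assume "k < dim_vec (?l \<cdot>\<^sub>v unit_vec ?N ?s)"
  then have k: "k < ?N" by simp
  have "(?J *\<^sub>v unit_vec ?N ?s) $ k = row ?J k \<bullet> unit_vec ?N ?s" using k by simp
  also have "\<dots> = row ?J k $ ?s" by (rule scalar_prod_right_unit[OF s])
  also have "\<dots> = ?J $$ (k, ?s)" using s k by simp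
  also have "\<dots> = (?l \<cdot>\<^sub>v unit_vec ?N ?s) $ k"
    using jordan_matrix_col_entry[OF assms(1) k assms(2)] k s by auto
  finally show "(?J *\<^sub>v unit_vec ?N ?s) $ k = (?l \<cdot>\<^sub>v unit_vec ?N ?s) $ k" .
qed simp

lemma pow_eigen:
  fixes A :: "'a :: field mat"
  assumes A: "A \<in> carrier_mat n n" and v: "v \<in> carrier_vec n" and ev: "A *\<^sub>v v = a \<cdot>\<^sub>v v"
  shows "A ^\<^sub>m t *\<^sub>v v = a ^ t \<cdot>\<^sub>v v"
proof (induction t)
  case 0
  have "dim_row A = n" using A by auto
  then show ?case using v by simp
next
  case (Suc t)
  have "A ^\<^sub>m Suc t *\<^sub>v v = (A ^\<^sub>m t * A) *\<^sub>v v" by simp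
  also have "\<dots> = A ^\<^sub>m t *\<^sub>v (A *\<^sub>v v)"
    by (rule assoc_mult_mat_vec[OF pow_carrier_mat[OF A] A v])
  also have "\<dots> = a \<cdot>\<^sub>v (A ^\<^sub>m t *\<^sub>v v)" unfolding ev
    by (rule mult_mat_vec[OF pow_carrier_mat[OF A] v])
  also have "\<dots> = a ^ Suc t \<cdot>\<^sub>v v" unfolding Suc by (simp add: smult_smult_assoc mult.commute)
  finally show ?case .
qed

lemma sim_eigen:
  fixes A :: "'a :: field mat"
  assumes P: "P \<in> carrier_mat n n" and Q: "Q \<in> carrier_mat n n" and J: "J \<in> carrier_mat n n"
    and QP: "Q * P = 1\<^sub>m n" and eqA: "A = P * J * Q"
    and e: "e \<in> carrier_vec n" and Je: "J *\<^sub>v e = l \<cdot>\<^sub>v e"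
  shows "A *\<^sub>v (P *\<^sub>v e) = l \<cdot>\<^sub>v (P *\<^sub>v e)"
proof -
  have "A *\<^sub>v (P *\<^sub>v e) = (P * J) *\<^sub>v (Q *\<^sub>v (P *\<^sub>v e))"
    unfolding eqA using P Q J e by (metis assoc_mult_mat_vec mult_carrier_mat mult_mat_vec_carrier)
  also have "Q *\<^sub>v (P *\<^sub>v e) = e" using P Q e QP
    by (metis assoc_mult_mat_vec one_mult_mat_vec)
  also have "(P * J) *\<^sub>v e = P *\<^sub>v (J *\<^sub>v e)" using P J e by simp
  also have "\<dots> = l \<cdot>\<^sub>v (P *\<^sub>v e)" unfolding Je using P e by (rule mult_mat_vec)
  finally show ?thesis .
qed

lemma re_im_kernel:
  fixes M :: "real mat"
  assumes M: "M \<in> carrier_mat 1 n" and w: "w \<in> carrier_vec n"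
    and z: "(map_mat complex_of_real M *\<^sub>v w) $ 0 = 0"
  shows "(M *\<^sub>v vec n (\<lambda>k. Re (w $ k))) $ 0 = 0" "(M *\<^sub>v vec n (\<lambda>k. Im (w $ k))) $ 0 = 0"
proof -
  have e: "(map_mat complex_of_real M *\<^sub>v w) $ 0 = (\<Sum>k\<in>{0..<n}. complex_of_real (M $$ (0,k)) * w $ k)"
    using M w by (auto simp: mult_mat_vec_def scalar_prod_def)
  have e1: "(M *\<^sub>v vec n (\<lambda>k. Re (w $ k))) $ 0 = (\<Sum>k\<in>{0..<n}. M $$ (0,k) * Re (w $ k))"
    using M by (auto simp: mult_mat_vec_def scalar_prod_def)
  have e2: "(M *\<^sub>v vec n (\<lambda>k. Im (w $ k))) $ 0 = (\<Sum>k\<in>{0..<n}. M $$ (0,k) * Im (w $ k))"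
    using M by (auto simp: mult_mat_vec_def scalar_prod_def)
  have "Re (\<Sum>k\<in>{0..<n}. complex_of_real (M $$ (0,k)) * w $ k) = 0" using z e by simp
  then show "(M *\<^sub>v vec n (\<lambda>k. Re (w $ k))) $ 0 = 0" unfolding e1 by (simp add: Re_sum)
  have "Im (\<Sum>k\<in>{0..<n}. complex_of_real (M $$ (0,k)) * w $ k) = 0" using z e by simp
  then show "(M *\<^sub>v vec n (\<lambda>k. Im (w $ k))) $ 0 = 0" unfolding e2 by (simp add: Im_sum)
qed

theorem lemma2:
  fixes A C :: "real mat" and n h :: nat and n_as :: "(nat \<times> complex) list"
    and i j :: nat and rs :: "nat list"
  assumes A: "A \<in> carrier_mat n n" and C: "C \<in> carrier_mat 1 n"
    and jnf: "jordan_nf (map_mat complex_of_real A) n_as"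
    and ij: "i < length n_as" "j < length n_as" "i \<noteq> j"
    and h: "h > 0"
    and pow: "(snd (n_as ! i)) ^ h = (snd (n_as ! j)) ^ h"
    and rs: "\<forall>r \<in> set rs. r > 0"
  shows "vec_space.rank (length rs) (sample_obs_matrix n A C (map (\<lambda>r. r * h) rs)) < n"
proof -
  let ?cA = "map_mat complex_of_real A"
  let ?C = "map_mat complex_of_real C"
  have cA: "?cA \<in> carrier_mat n n" using A by simp
  have cC: "?C \<in> carrier_mat 1 n" using C by simp
  from jnf have nz: "0 \<notin> fst ` set n_as" and sim: "similar_mat ?cA (jordan_matrix n_as)"
    unfolding jordan_nf_def by auto
  from sim obtain P Q where wit: "similar_mat_wit ?cA (jordan_matrix n_as) P Q"
    unfolding similar_mat_def by blast
  have P: "P \<in> carrier_mat n n" and Q: "Q \<in> carrier_mat n n"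
    and J: "jordan_matrix n_as \<in> carrier_mat n n" and QP: "Q * P = 1\<^sub>m n"
    and eqA: "?cA = P * jordan_matrix n_as * Q"
  proof -
    have d: "dim_row ?cA = n" using A by simp
    from wit[unfolded similar_mat_wit_def Let_def d]
    have W: "{?cA, jordan_matrix n_as, P, Q} \<subseteq> carrier_mat n n" "Q * P = 1\<^sub>m n"
      "?cA = P * jordan_matrix n_as * Q" by blast+
    from W(1) show "P \<in> carrier_mat n n" "Q \<in> carrier_mat n n"
      "jordan_matrix n_as \<in> carrier_mat n n" by blast+
    from W(2,3) show "Q * P = 1\<^sub>m n" "?cA = P * jordan_matrix n_as * Q" by blast+
  qed
  have N: "sum_list (map fst n_as) = n" using J by auto
  define si where "si = sum_list (map fst (take i n_as))"
  define sj where "sj = sum_list (map fst (take j n_as))"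
  have si: "si < n" using take_sum_lt[OF ij(1) nz] N by (simp add: si_def)
  have sj: "sj < n" using take_sum_lt[OF ij(2) nz] N by (simp add: sj_def)
  have sij: "si \<noteq> sj"
  proof (cases "i < j")
    case True
    then show ?thesis using take_sum_mono[OF True _ nz] ij unfolding si_def sj_def by auto
  next
    case False
    then have ji: "j < i" using ij by auto
    then show ?thesis using take_sum_mono[OF ji _ nz] ij unfolding si_def sj_def by auto
  qed
  define ei :: "complex vec" where "ei = unit_vec n si"
  define ej :: "complex vec" where "ej = unit_vec n sj"
  have ei: "ei \<in> carrier_vec n" and ej: "ej \<in> carrier_vec n" unfolding ei_def ej_def by auto
  have Jei: "jordan_matrix n_as *\<^sub>v ei = snd (n_as ! i) \<cdot>\<^sub>v ei"
    using jordan_matrix_eigen[OF ij(1) nz] N by (simp add: ei_def si_def)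
  have Jej: "jordan_matrix n_as *\<^sub>v ej = snd (n_as ! j) \<cdot>\<^sub>v ej"
    using jordan_matrix_eigen[OF ij(2) nz] N by (simp add: ej_def sj_def)
  define vi where "vi = P *\<^sub>v ei"
  define vj where "vj = P *\<^sub>v ej"
  have vi: "vi \<in> carrier_vec n" using mult_mat_vec_carrier[OF P ei] unfolding vi_def .
  have vj: "vj \<in> carrier_vec n" using mult_mat_vec_carrier[OF P ej] unfolding vj_def .
  have Avi: "?cA *\<^sub>v vi = snd (n_as ! i) \<cdot>\<^sub>v vi"
    unfolding vi_def by (rule sim_eigen[OF P Q J QP eqA ei Jei])
  have Avj: "?cA *\<^sub>v vj = snd (n_as ! j) \<cdot>\<^sub>v vj"
    unfolding vj_def by (rule sim_eigen[OF P Q J QP eqA ej Jej])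
  define \<mu> where "\<mu> = snd (n_as ! i) ^ h"
  have powi: "?cA ^\<^sub>m (r * h) *\<^sub>v vi = \<mu> ^ r \<cdot>\<^sub>v vi" for r
  proof -
    have "snd (n_as ! i) ^ (r * h) = \<mu> ^ r" unfolding \<mu>_def by (metis power_mult mult.commute)
    then show ?thesis using pow_eigen[OF cA vi Avi, of "r * h"] by simp
  qed
  have powj: "?cA ^\<^sub>m (r * h) *\<^sub>v vj = \<mu> ^ r \<cdot>\<^sub>v vj" for r
  proof -
    have "snd (n_as ! j) ^ (r * h) = \<mu> ^ r" unfolding \<mu>_def pow by (metis power_mult mult.commute)
    then show ?thesis using pow_eigen[OF cA vj Avj, of "r * h"] by simp
  qed
  have QPv: "Q *\<^sub>v (P *\<^sub>v v) = v" if "v \<in> carrier_vec n" for v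
    using P Q QP that by (metis assoc_mult_mat_vec one_mult_mat_vec)
  define c1 where "c1 = (?C *\<^sub>v vi) $ 0"
  define c2 where "c2 = (?C *\<^sub>v vj) $ 0"
  have "\<exists>w. w \<in> carrier_vec n \<and> w \<noteq> 0\<^sub>v n \<and> (\<forall>r. (?C *\<^sub>v (?cA ^\<^sub>m (r * h) *\<^sub>v w)) $ 0 = 0)"
  proof (cases "c1 = 0 \<and> c2 = 0")
    case True
    have "vi \<noteq> 0\<^sub>v n"
    proof
      assume "vi = 0\<^sub>v n"
      then have "ei = Q *\<^sub>v 0\<^sub>v n" using QPv[OF ei] unfolding vi_def by simp
      also have "\<dots> = 0\<^sub>v n" using Q by auto
      finally have "ei $ si = 0" using si by simp
      then show False using si unfolding ei_def by simp
    qed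
    moreover have "(?C *\<^sub>v (?cA ^\<^sub>m (r * h) *\<^sub>v vi)) $ 0 = 0" for r
    proof -
      have "?C *\<^sub>v (?cA ^\<^sub>m (r * h) *\<^sub>v vi) = \<mu> ^ r \<cdot>\<^sub>v (?C *\<^sub>v vi)"
        unfolding powi by (rule mult_mat_vec[OF cC vi])
      then show ?thesis using True cC unfolding c1_def by simp
    qed
    ultimately show ?thesis using vi by blast
  next
    case False
    define u where "u = c2 \<cdot>\<^sub>v ei - c1 \<cdot>\<^sub>v ej"
    have u: "u \<in> carrier_vec n" unfolding u_def using ei ej by auto
    define w where "w = P *\<^sub>v u"
    have w: "w \<in> carrier_vec n" unfolding w_def using P u by auto
    have wlin: "w = c2 \<cdot>\<^sub>v vi - c1 \<cdot>\<^sub>v vj"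
      unfolding w_def u_def vi_def vj_def
      using P ei ej by (simp add: mult_minus_distrib_mat_vec mult_mat_vec)
    have "u \<noteq> 0\<^sub>v n"
    proof
      assume u0: "u = 0\<^sub>v n"
      have "u $ si = c2" "u $ sj = - c1" unfolding u_def ei_def ej_def using si sj sij by auto
      then show False using u0 False si sj by auto
    qed
    moreover have Q0: "Q *\<^sub>v 0\<^sub>v n = 0\<^sub>v n" using Q by auto
    ultimately have "w \<noteq> 0\<^sub>v n" using QPv[OF u] unfolding w_def by metis
    moreover have "(?C *\<^sub>v (?cA ^\<^sub>m (r * h) *\<^sub>v w)) $ 0 = 0" for r
    proof -
      have pc: "?cA ^\<^sub>m (r * h) \<in> carrier_mat n n" using cA by simp
      have "?cA ^\<^sub>m (r * h) *\<^sub>v w = c2 \<cdot>\<^sub>v (\<mu> ^ r \<cdot>\<^sub>v vi) - c1 \<cdot>\<^sub>v (\<mu> ^ r \<cdot>\<^sub>v vj)"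
        unfolding wlin using pc vi vj
        by (simp add: mult_minus_distrib_mat_vec mult_mat_vec powi powj)
      then have "?C *\<^sub>v (?cA ^\<^sub>m (r * h) *\<^sub>v w) =
          c2 \<cdot>\<^sub>v (\<mu> ^ r \<cdot>\<^sub>v (?C *\<^sub>v vi)) - c1 \<cdot>\<^sub>v (\<mu> ^ r \<cdot>\<^sub>v (?C *\<^sub>v vj))"
        using cC vi vj by (simp add: mult_minus_distrib_mat_vec mult_mat_vec)
      then show ?thesis using cC unfolding c1_def c2_def by simp
    qed
    ultimately show ?thesis using w by blast
  qed
  then obtain w where w: "w \<in> carrier_vec n" "w \<noteq> 0\<^sub>v n"
    and wk: "\<And>r. (?C *\<^sub>v (?cA ^\<^sub>m (r * h) *\<^sub>v w)) $ 0 = 0" by blast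
  define ts where "ts = map (\<lambda>r. r * h) rs"
  have real0: "((C * A ^\<^sub>m (r * h)) *\<^sub>v vec n (\<lambda>k. Re (w $ k))) $ 0 = 0 \<and>
      ((C * A ^\<^sub>m (r * h)) *\<^sub>v vec n (\<lambda>k. Im (w $ k))) $ 0 = 0" for r
  proof -
    have M: "C * A ^\<^sub>m (r * h) \<in> carrier_mat 1 n" using C A by simp
    have "map_mat complex_of_real (C * A ^\<^sub>m (r * h)) = ?C * ?cA ^\<^sub>m (r * h)"
      by (simp only: of_real_hom.mat_hom_mult[OF C pow_carrier_mat[OF A]] of_real_hom.mat_hom_pow[OF A])
    then have "(map_mat complex_of_real (C * A ^\<^sub>m (r * h)) *\<^sub>v w) $ 0 = (?C *\<^sub>v (?cA ^\<^sub>m (r * h) *\<^sub>v w)) $ 0"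
      using assoc_mult_mat_vec[OF cC pow_carrier_mat[OF cA] w(1)] by metis
    then have "(map_mat complex_of_real (C * A ^\<^sub>m (r * h)) *\<^sub>v w) $ 0 = 0"
      using wk[of r] by metis
    from re_im_kernel[OF M w(1) this] show ?thesis by simp
  qed
  define x where "x = (if vec n (\<lambda>k. Re (w $ k)) \<noteq> 0\<^sub>v n then vec n (\<lambda>k. Re (w $ k)) else vec n (\<lambda>k. Im (w $ k)))"
  have x: "x \<in> carrier_vec n" unfolding x_def by auto
  have x0: "x \<noteq> 0\<^sub>v n"
  proof
    assume "x = 0\<^sub>v n"
    then have z: "vec n (\<lambda>k. Re (w $ k)) = 0\<^sub>v n" "vec n (\<lambda>k. Im (w $ k)) = 0\<^sub>v n"
      unfolding x_def by (auto split: if_splits)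
    have "w = 0\<^sub>v n"
    proof (rule eq_vecI)
      fix k assume "k < dim_vec (0\<^sub>v n :: complex vec)"
      then have k: "k < n" by simp
      have "Re (w $ k) = 0" using arg_cong[OF z(1), of "\<lambda>v. v $ k"] k by simp
      moreover have "Im (w $ k) = 0" using arg_cong[OF z(2), of "\<lambda>v. v $ k"] k by simp
      ultimately show "w $ k = 0\<^sub>v n $ k" using k by (simp add: complex_eq_iff)
    qed (use w in auto)
    then show False using w by simp
  qed
  have xk: "((C * A ^\<^sub>m (r * h)) *\<^sub>v x) $ 0 = 0" for r
    using real0[of r] unfolding x_def by auto
  let ?O = "sample_obs_matrix n A C ts"
  have O: "?O \<in> carrier_mat (length rs) n" unfolding sample_obs_matrix_def ts_def by (metis length_map mat_of_rows_carrier(1))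
  have Ox: "?O *\<^sub>v x = 0\<^sub>v (length rs)"
  proof (rule eq_vecI)
    fix k assume "k < dim_vec (0\<^sub>v (length rs) :: real vec)"
    then have k: "k < length rs" by simp
    let ?vs = "map (\<lambda>t. row (C * A ^\<^sub>m t) 0) ts"
    have len: "k < length ?vs" using k unfolding ts_def by simp
    have nth: "?vs ! k = row (C * A ^\<^sub>m (rs ! k * h)) 0" using k unfolding ts_def by simp
    have "C * A ^\<^sub>m (rs ! k * h) \<in> carrier_mat 1 n" using C A by simp
    then have cv: "?vs ! k \<in> carrier_vec n" unfolding nth by (metis carrier_matD(2) row_carrier)
    have "row ?O k = row (C * A ^\<^sub>m (rs ! k * h)) 0"
      unfolding sample_obs_matrix_def mat_of_rows_row[OF len cv] nth ..
    then have "(?O *\<^sub>v x) $ k = ((C * A ^\<^sub>m (rs ! k * h)) *\<^sub>v x) $ 0"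
      using k O C A by simp
    then show "(?O *\<^sub>v x) $ k = 0\<^sub>v (length rs) $ k" using xk k by simp
  qed (use O in simp)
  show ?thesis using vec_space.kernel_low_rank[OF O x x0 Ox] unfolding ts_def .
qed

end
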